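(* Let $G$ and $H$ be finite simple graphs. (1) If $g(G)=g(H)=3$, then $G \times H$ is not a cover graph. (2) If $g(G)>3 \geq \chi(H)$, then $G\times H$ is a cover graph.
   Context: $g(G)$ denotes the girth of $G$ (length of a shortest cycle, $\infty$ if $G$ has no cycles) and $\chi(H)$ the chromatic number. A graph is a cover graph if it is the underlying (undirected) graph of the Hasse diagram of some finite partially ordered set. The direct product $G \times H$ has vertex set $V(G)\times V(H)$, with $(g_i,h_s)$ adjacent to $(g_j,h_t)$ if and only if $g_ig_j \in E(G)$ and $h_sh_t \in E(H)$. *)

theory Defs
  imports Main "HOL-Library.Extended_Nat"
begin

type_synonym 'a graph = "'a set \<times> ('a \<times> 'a) set"

definition verts :: "'a graph \<Rightarrow> 'a set" where "verts G = fst G"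
definition edges :: "'a graph \<Rightarrow> ('a \<times> 'a) set" where "edges G = snd G"

definition finite_simple_graph :: "'a graph \<Rightarrow> bool" where
  "finite_simple_graph G \<longleftrightarrow> finite (verts G) \<and> edges G \<subseteq> verts G \<times> verts G
     \<and> sym (edges G) \<and> irrefl (edges G)"

definition is_cycle :: "'a graph \<Rightarrow> 'a list \<Rightarrow> bool" where
  "is_cycle G xs \<longleftrightarrow> length xs \<ge> 3 \<and> distinct xs \<and> set xs \<subseteq> verts G \<and>
     (\<forall>i < length xs. (xs ! i, xs ! ((i + 1) mod length xs)) \<in> edges G)"

(* girth: length of a shortest cycle, \<infinity> if acyclic *)
definition girth :: "'a graph \<Rightarrow> enat" where
  "girth G = (INF xs \<in> {xs. is_cycle G xs}. enat (length xs))"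

definition proper_colouring :: "'a graph \<Rightarrow> nat \<Rightarrow> ('a \<Rightarrow> nat) \<Rightarrow> bool" where
  "proper_colouring G k c \<longleftrightarrow> (\<forall>v \<in> verts G. c v < k) \<and> (\<forall>(u,v) \<in> edges G. c u \<noteq> c v)"

definition chromatic_number :: "'a graph \<Rightarrow> nat" where
  "chromatic_number G = (LEAST k. \<exists>c. proper_colouring G k c)"

definition covers :: "('a \<times> 'a) set \<Rightarrow> 'a \<Rightarrow> 'a \<Rightarrow> bool" where
  "covers R u v \<longleftrightarrow> (u, v) \<in> R \<and> u \<noteq> v \<and>
     \<not> (\<exists>w. (u, w) \<in> R \<and> (w, v) \<in> R \<and> w \<noteq> u \<and> w \<noteq> v)"

definition cover_graph :: "'a graph \<Rightarrow> bool" where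
  "cover_graph G \<longleftrightarrow> (\<exists>R. partial_order_on (verts G) R \<and>
     (\<forall>u \<in> verts G. \<forall>v \<in> verts G. (u, v) \<in> edges G \<longleftrightarrow> covers R u v \<or> covers R v u))"

definition direct_product :: "'a graph \<Rightarrow> 'b graph \<Rightarrow> ('a \<times> 'b) graph" where
  "direct_product G H = (verts G \<times> verts H,
     {((g, h), (g', h')). (g, g') \<in> edges G \<and> (h, h') \<in> edges H})"

end

theory Submission
  imports Defs
begin

lemma girth3_tri:
  assumes "girth G = 3"
  shows "\<exists>a b c. (a,b) \<in> edges G \<and> (b,c) \<in> edges G \<and> (c,a) \<in> edges G"
proof -
  let ?A = "(\<lambda>xs. enat (length xs)) ` {xs. is_cycle G xs}"
  have ne: "?A \<noteq> {}"
  proof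
    assume "?A = {}" then have "girth G = Inf ({}::enat set)" unfolding girth_def by simp
    with assms show False by (simp add: top_enat_def)
  qed
  have "girth G = (LEAST x. x \<in> ?A)" unfolding girth_def Inf_enat_def by (rule if_not_P[OF ne])
  hence "girth G \<in> ?A" using ne by (metis LeastI ex_in_conv)
  then obtain xs where c: "is_cycle G xs" "length xs = 3" using assms by (auto simp: numeral_eq_enat)
  have h: "\<forall>i<length xs. (xs ! i, xs ! ((i + 1) mod length xs)) \<in> edges G"
    using c(1) unfolding is_cycle_def by blast
  have "(xs!0, xs!1) \<in> edges G" using h[rule_format, of 0] c(2) by simp
  moreover have "(xs!1, xs!2) \<in> edges G" using h[rule_format, of 1] c(2) by (simp add: numeral_2_eq_2)
  moreover have "(xs!2, xs!0) \<in> edges G" using h[rule_format, of 2] c(2) by simp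
  ultimately show ?thesis by blast
qed

lemma tri_girth:
  assumes "finite_simple_graph G" "(a,b) \<in> edges G" "(b,d) \<in> edges G" "(d,a) \<in> edges G"
  shows "girth G \<le> 3"
proof -
  have irr: "irrefl (edges G)" and sub: "edges G \<subseteq> verts G \<times> verts G"
    using assms(1) unfolding finite_simple_graph_def by auto
  have "a \<noteq> b" "b \<noteq> d" "d \<noteq> a" using irr assms(2-4) unfolding irrefl_def by auto
  moreover have "\<forall>i<length [a,b,d]. ([a,b,d] ! i, [a,b,d] ! ((i + 1) mod length [a,b,d])) \<in> edges G"
  proof (intro allI impI)
    fix i assume "i < length [a,b,d]"
    hence "i = 0 \<or> i = 1 \<or> i = 2" by auto
    thus "([a,b,d] ! i, [a,b,d] ! ((i + 1) mod length [a,b,d])) \<in> edges G"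
      using assms(2-4) by (elim disjE) (simp_all add: numeral_2_eq_2)
  qed
  moreover have "set [a,b,d] \<subseteq> verts G" using sub assms(2-4) by auto
  moreover have "length [a,b,d] \<ge> 3" by simp
  ultimately have "is_cycle G [a,b,d]" unfolding is_cycle_def by simp
  hence "[a,b,d] \<in> {xs. is_cycle G xs}" by simp
  hence "girth G \<le> enat (length [a,b,d])" unfolding girth_def by (rule INF_lower)
  moreover have "enat (length [a,b,d]) = 3" by (simp add: numeral_3_eq_3 numeral_eq_enat)
  ultimately show ?thesis by simp
qed

lemma cover_tri:
  assumes "partial_order_on V R"
    and "covers R u v \<or> covers R v u" "covers R v w \<or> covers R w v" "covers R u w \<or> covers R w u"
  shows False
proof -
  have t: "trans R" and an: "antisym R" using assms(1)
    unfolding partial_order_on_def preorder_on_def by auto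
  have ch: "\<not> covers R x z \<and> \<not> covers R z x" if "covers R x y" "covers R y z" for x y z
  proof -
    have xy: "(x,y) \<in> R" "x \<noteq> y" and yz: "(y,z) \<in> R" "y \<noteq> z"
      using that unfolding covers_def by auto
    have xz: "(x,z) \<in> R" using xy yz t by (metis transD)
    have "x \<noteq> z"
    proof
      assume "x = z"
      hence "(y,x) \<in> R" using yz by simp
      thus False using xy an by (metis antisymD)
    qed
    have "\<not> covers R x z" using xy yz \<open>x \<noteq> z\<close> unfolding covers_def by blast
    moreover have "\<not> covers R z x"
    proof
      assume "covers R z x" hence "(z,x) \<in> R" unfolding covers_def by blast
      thus False using xz an \<open>x \<noteq> z\<close> by (metis antisymD)
    qed
    ultimately show ?thesis by blast
  qed
  have c1: "\<not> (covers R x y \<and> covers R y z \<and> (covers R x z \<or> covers R z x))" for x y z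
    using ch[of x y z] by blast
  show False using assms(2-4) c1[of u v w] c1[of v w u] c1[of w u v] c1[of u w v] c1[of w v u] c1[of v u w]
    by (elim disjE) simp_all
qed


theorem theorem6:
  fixes G :: "'a graph" and H :: "'b graph"
  assumes "finite_simple_graph G" and "finite_simple_graph H"
  shows "(girth G = 3 \<and> girth H = 3 \<longrightarrow> \<not> cover_graph (direct_product G H))
       \<and> (girth G > 3 \<and> 3 \<ge> chromatic_number H \<longrightarrow> cover_graph (direct_product G H))"
proof (intro conjI impI)
  assume a: "girth G = 3 \<and> girth H = 3"
  obtain a b d where G: "(a,b) \<in> edges G" "(b,d) \<in> edges G" "(d,a) \<in> edges G"
    using girth3_tri[OF conjunct1[OF a]] by blast
  obtain a' b' d' where H: "(a',b') \<in> edges H" "(b',d') \<in> edges H" "(d',a') \<in> edges H"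
    using girth3_tri[OF conjunct2[OF a]] by blast
  have sG: "sym (edges G)" and sH: "sym (edges H)" using assms unfolding finite_simple_graph_def by auto
  have subG: "edges G \<subseteq> verts G \<times> verts G" and subH: "edges H \<subseteq> verts H \<times> verts H"
    using assms unfolding finite_simple_graph_def by auto
  let ?P = "direct_product G H"
  have E: "((x,y),(x',y')) \<in> edges ?P \<longleftrightarrow> (x,x') \<in> edges G \<and> (y,y') \<in> edges H" for x y x' y'
    unfolding direct_product_def edges_def by simp
  have V: "verts ?P = verts G \<times> verts H" unfolding direct_product_def verts_def by simp
  show "\<not> cover_graph ?P"
  proof
    assume "cover_graph ?P"
    then obtain R where po: "partial_order_on (verts ?P) R" and
      cv: "\<forall>u \<in> verts ?P. \<forall>v \<in> verts ?P. (u, v) \<in> edges ?P \<longleftrightarrow> covers R u v \<or> covers R v u"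
      unfolding cover_graph_def by blast
    have vs: "(a,a') \<in> verts ?P" "(b,b') \<in> verts ?P" "(d,d') \<in> verts ?P"
      using G H subG subH V by auto
    have e1: "((a,a'),(b,b')) \<in> edges ?P" using E G H by simp
    have e2: "((b,b'),(d,d')) \<in> edges ?P" using E G H by simp
    have "(a,d) \<in> edges G" "(a',d') \<in> edges H" using symD[OF sG G(3)] symD[OF sH H(3)] by auto
    hence e3: "((a,a'),(d,d')) \<in> edges ?P" using E by simp
    have "covers R (a,a') (b,b') \<or> covers R (b,b') (a,a')" using cv[rule_format, OF vs(1) vs(2)] e1 by simp
    moreover have "covers R (b,b') (d,d') \<or> covers R (d,d') (b,b')" using cv[rule_format, OF vs(2) vs(3)] e2 by simp
    moreover have "covers R (a,a') (d,d') \<or> covers R (d,d') (a,a')" using cv[rule_format, OF vs(1) vs(3)] e3 by simp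
    ultimately show False by (rule cover_tri[OF po])
  qed
next
  assume a: "girth G > 3 \<and> 3 \<ge> chromatic_number H"
  have sG: "sym (edges G)" and sH: "sym (edges H)" using assms unfolding finite_simple_graph_def by auto
  have subG: "edges G \<subseteq> verts G \<times> verts G" and subH: "edges H \<subseteq> verts H \<times> verts H"
    using assms unfolding finite_simple_graph_def by auto
  have irrH: "irrefl (edges H)" using assms unfolding finite_simple_graph_def by auto
  have notri: "\<not> ((x,y) \<in> edges G \<and> (y,z) \<in> edges G \<and> (z,x) \<in> edges G)" for x y z
  proof
    assume "(x,y) \<in> edges G \<and> (y,z) \<in> edges G \<and> (z,x) \<in> edges G"
    hence "girth G \<le> 3" using tri_girth[OF assms(1), of x y z] by blast
    thus False using a by (meson not_le)
  qed
  have ex: "\<exists>k c. proper_colouring H k c"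
  proof -
    have fin: "finite (verts H)" using assms(2) unfolding finite_simple_graph_def by blast
    obtain f :: "'b \<Rightarrow> nat" where f: "inj_on f (verts H)"
      using finite_imp_inj_to_nat_seg[OF fin] by blast
    have "proper_colouring H (Suc (Max (f ` verts H))) f"
      unfolding proper_colouring_def
    proof (intro conjI ballI)
      fix v assume "v \<in> verts H"
      thus "f v < Suc (Max (f ` verts H))" using assms(2) unfolding finite_simple_graph_def
        by (simp add: le_imp_less_Suc)
    next
      fix e assume "e \<in> edges H"
      then obtain u v where e: "e = (u,v)" "(u,v) \<in> edges H" by (cases e) auto
      hence "u \<noteq> v" "u \<in> verts H" "v \<in> verts H" using irrH subH unfolding irrefl_def by auto
      thus "case e of (u, v) \<Rightarrow> f u \<noteq> f v" using e f unfolding inj_on_def by auto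
    qed
    thus ?thesis by blast
  qed
  then obtain c where c: "proper_colouring H (chromatic_number H) c"
    using LeastI_ex[of "\<lambda>k. \<exists>c. proper_colouring H k c"] ex unfolding chromatic_number_def by blast
  have ch3: "chromatic_number H \<le> 3" using a by blast
  have c3: "c v < 3" if "v \<in> verts H" for v
  proof -
    have "c v < chromatic_number H" using c that unfolding proper_colouring_def by blast
    thus ?thesis using ch3 by linarith
  qed
  have cne: "\<And>u v. (u,v) \<in> edges H \<Longrightarrow> c u \<noteq> c v" using c unfolding proper_colouring_def by blast
  let ?P = "direct_product G H"
  have E: "((x,y),(x',y')) \<in> edges ?P \<longleftrightarrow> (x,x') \<in> edges G \<and> (y,y') \<in> edges H" for x y x' y'
    unfolding direct_product_def edges_def by simp
  have V: "verts ?P = verts G \<times> verts H" unfolding direct_product_def verts_def by simp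
  define S where "S = {((x,y),(x',y')). (x,x') \<in> edges G \<and> (y,y') \<in> edges H \<and> c y < c y'}"
  define R where "R = Id_on (verts ?P) \<union> S \<union> (S O S)"
  have Sc: "c (snd u) < c (snd v)" if "(u,v) \<in> S" for u v using that unfolding S_def by auto
  have Sv: "u \<in> verts ?P \<and> v \<in> verts ?P" if "(u,v) \<in> S" for u v
    using that subG subH V unfolding S_def by auto
  have Sc3: "c (snd u) < 3" if "(u,v) \<in> S" for u v using Sv[OF that] V c3 by auto
  have Sc3': "c (snd v) < 3" if "(u,v) \<in> S" for u v using Sv[OF that] V c3 by auto
  have SSS: "(u,v) \<in> S \<Longrightarrow> (v,w) \<in> S \<Longrightarrow> (w,z) \<in> S \<Longrightarrow> False" for u v w z
  proof -
    assume "(u,v) \<in> S" "(v,w) \<in> S" "(w,z) \<in> S"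
    thus False using Sc[of u v] Sc[of v w] Sc[of w z] Sc3'[of w z] by linarith
  qed
  have Rdec: "(x,y) \<in> S \<or> (\<exists>z. (x,z) \<in> S \<and> (z,y) \<in> S)" if "(x,y) \<in> R" "x \<noteq> y" for x y
    using that unfolding R_def by blast
  have ptrans: "trans R" unfolding trans_def
  proof (intro allI impI)
    fix x y z assume xy: "(x,y) \<in> R" and yz: "(y,z) \<in> R"
    show "(x,z) \<in> R"
    proof (cases "x = y \<or> y = z")
      case True thus ?thesis using xy yz by blast
    next
      case False
      hence ne: "x \<noteq> y" "y \<noteq> z" by auto
      have d1: "(x,y) \<in> S \<or> (\<exists>w. (x,w) \<in> S \<and> (w,y) \<in> S)" using Rdec[OF xy ne(1)] .
      have d2: "(y,z) \<in> S \<or> (\<exists>w. (y,w) \<in> S \<and> (w,z) \<in> S)" using Rdec[OF yz ne(2)] .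
      have o1: "\<exists>t. (t,y) \<in> S" using d1 by blast
      have o2: "\<exists>t. (y,t) \<in> S" using d2 by blast
      have s1: "(x,y) \<in> S"
      proof (rule ccontr)
        assume "(x,y) \<notin> S"
        then obtain w where "(x,w) \<in> S" "(w,y) \<in> S" using d1 by blast
        moreover obtain t where "(y,t) \<in> S" using o2 by blast
        ultimately show False using SSS by blast
      qed
      have s2: "(y,z) \<in> S"
      proof (rule ccontr)
        assume "(y,z) \<notin> S"
        then obtain w where "(y,w) \<in> S" "(w,z) \<in> S" using d2 by blast
        moreover obtain t where "(t,y) \<in> S" using o1 by blast
        ultimately show False using SSS by blast
      qed
      have "(x,z) \<in> S O S" using s1 s2 by blast
      thus ?thesis unfolding R_def by blast
    qed
  qed
  have Rc: "x = y \<or> c (snd x) < c (snd y)" if "(x,y) \<in> R" for x y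
  proof -
    have "(x,y) \<in> Id_on (verts ?P) \<or> (x,y) \<in> S \<or> (x,y) \<in> S O S" using that unfolding R_def by blast
    moreover have "(x,y) \<in> S O S \<Longrightarrow> c (snd x) < c (snd y)"
    proof -
      assume "(x,y) \<in> S O S"
      then obtain z where "(x,z) \<in> S" "(z,y) \<in> S" by blast
      thus ?thesis using Sc[of x z] Sc[of z y] by linarith
    qed
    ultimately show ?thesis using Sc[of x y] by blast
  qed
  have pant: "antisym R"
  proof (rule antisymI)
    fix x y assume "(x,y) \<in> R" "(y,x) \<in> R"
    thus "x = y" using Rc[of x y] Rc[of y x] by (metis less_asym)
  qed
  have po: "partial_order_on (verts ?P) R"
    unfolding partial_order_on_def preorder_on_def refl_on_def
  proof (intro conjI)
    show "R \<subseteq> verts ?P \<times> verts ?P"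
    proof
      fix p assume "p \<in> R"
      then obtain x y where p: "p = (x,y)" "(x,y) \<in> R" by (cases p) auto
      have "x = y \<and> x \<in> verts ?P \<or> (x,y) \<in> S \<or> (\<exists>z. (x,z) \<in> S \<and> (z,y) \<in> S)"
        using p(2) unfolding R_def by blast
      thus "p \<in> verts ?P \<times> verts ?P" using Sv p(1) by blast
    qed
    show "\<forall>x\<in>verts ?P. (x, x) \<in> R" unfolding R_def by blast
  qed (rule ptrans, rule pant)
  have SE: "(u,v) \<in> S \<Longrightarrow> (u,v) \<in> edges ?P" for u v unfolding S_def using E by auto
  have Scov: "covers R u v" if "(u,v) \<in> S" for u v
  proof -
    have "u \<noteq> v" using Sc[OF that] by auto
    moreover have "\<not> (\<exists>w. (u, w) \<in> R \<and> (w, v) \<in> R \<and> w \<noteq> u \<and> w \<noteq> v)"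
    proof
      assume "\<exists>w. (u, w) \<in> R \<and> (w, v) \<in> R \<and> w \<noteq> u \<and> w \<noteq> v"
      then obtain w where w: "(u, w) \<in> R" "(w, v) \<in> R" "w \<noteq> u" "w \<noteq> v" by blast
      have d1: "(u,w) \<in> S \<or> (\<exists>z. (u,z) \<in> S \<and> (z,w) \<in> S)" using Rdec[OF w(1)] w(3) by metis
      have d2: "(w,v) \<in> S \<or> (\<exists>z. (w,z) \<in> S \<and> (z,v) \<in> S)" using Rdec[OF w(2)] w(4) by metis
      have o1: "\<exists>t. (t,w) \<in> S" using d1 by blast
      have o2: "\<exists>t. (w,t) \<in> S" using d2 by blast
      have uw: "(u,w) \<in> S"
      proof (rule ccontr)
        assume "(u,w) \<notin> S"
        then obtain z where "(u,z) \<in> S" "(z,w) \<in> S" using d1 by blast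
        moreover obtain t where "(w,t) \<in> S" using o2 by blast
        ultimately show False using SSS by blast
      qed
      have wv: "(w,v) \<in> S"
      proof (rule ccontr)
        assume "(w,v) \<notin> S"
        then obtain z where "(w,z) \<in> S" "(z,v) \<in> S" using d2 by blast
        moreover obtain t where "(t,w) \<in> S" using o1 by blast
        ultimately show False using SSS by blast
      qed
      obtain x y where u: "u = (x,y)" by (cases u)
      obtain x' y' where w': "w = (x',y')" by (cases w)
      obtain x'' y'' where v: "v = (x'',y'')" by (cases v)
      have "(x,x') \<in> edges G" "(x',x'') \<in> edges G" "(x,x'') \<in> edges G"
        using uw wv that u v w' unfolding S_def by auto
      thus False using notri[of x x' x''] sG unfolding sym_def by blast
    qed
    moreover have "(u,v) \<in> R" using that unfolding R_def by blast
    ultimately show ?thesis unfolding covers_def by blast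
  qed
  have covS: "(u,v) \<in> S" if "covers R u v" for u v
  proof -
    have uv: "(u,v) \<in> R" "u \<noteq> v" and nw: "\<not> (\<exists>w. (u, w) \<in> R \<and> (w, v) \<in> R \<and> w \<noteq> u \<and> w \<noteq> v)"
      using that unfolding covers_def by auto
    show ?thesis
    proof (rule ccontr)
      assume "(u,v) \<notin> S"
      then obtain w where "(u,w) \<in> S" "(w,v) \<in> S" using Rdec[OF uv] by blast
      moreover hence "w \<noteq> u" "w \<noteq> v" using Sc by fastforce+
      moreover have "(u,w) \<in> R" "(w,v) \<in> R" using calculation unfolding R_def by blast+
      ultimately show False using nw by blast
    qed
  qed
  show "cover_graph ?P"
    unfolding cover_graph_def
  proof (intro exI conjI ballI)
    show "partial_order_on (verts ?P) R" by (rule po)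
  next
    fix u v assume uv: "u \<in> verts ?P" "v \<in> verts ?P"
    show "(u, v) \<in> edges ?P \<longleftrightarrow> covers R u v \<or> covers R v u"
    proof
      assume e: "(u, v) \<in> edges ?P"
      obtain x y where u: "u = (x,y)" by (cases u)
      obtain x' y' where v: "v = (x',y')" by (cases v)
      have "(x,x') \<in> edges G" "(y,y') \<in> edges H" using e E u v by auto
      moreover hence "(x',x) \<in> edges G" "(y',y) \<in> edges H" using sG sH unfolding sym_def by auto
      moreover have "c y \<noteq> c y'" using cne calculation by blast
      ultimately have "(u,v) \<in> S \<or> (v,u) \<in> S" unfolding S_def u v by auto
      thus "covers R u v \<or> covers R v u" using Scov by blast
    next
      assume "covers R u v \<or> covers R v u"
      hence "(u,v) \<in> S \<or> (v,u) \<in> S" using covS by blast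
      thus "(u, v) \<in> edges ?P" using SE E sG sH unfolding sym_def by (metis prod.collapse)
    qed
  qed
qed

end
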